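(* Let $m,n$ be positive integers and let $K_{m,n}$ be the complete bipartite graph with part sizes $m$ and $n$. Then the number of shellings of $K_{m,n}$ is $$F(K_{m,n})=\frac{m!\,n!\,(mn)!}{(m+n-1)!}.$$
   Context: For a finite undirected graph $G=(V,E)$, a shelling of $G$ is a total ordering $\sigma(1),\sigma(2),\ldots,\sigma(|E|)$ of the edge set $E$ such that for every $k=1,\ldots,|E|$ the edges $\sigma(1),\ldots,\sigma(k)$ form a connected subgraph of $G$. $F(G)$ denotes the number of shellings of $G$. *)

theory Defs
  imports Complex_Main
begin

(* A graph is given by its edge set; an edge is a 2-element set of vertices. *)

definition adj_rel :: "'a set set \<Rightarrow> ('a \<times> 'a) set" where
  "adj_rel S = {(u, v). {u, v} \<in> S}"

definition edges_connected :: "'a set set \<Rightarrow> bool" where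
  "edges_connected S \<longleftrightarrow> (\<forall>u\<in>\<Union>S. \<forall>v\<in>\<Union>S. (u, v) \<in> (adj_rel S)\<^sup>*)"

definition shellings :: "'a set set \<Rightarrow> 'a set list set" where
  "shellings E = {xs. distinct xs \<and> set xs = E \<and>
      (\<forall>k\<in>{1..length xs}. edges_connected (set (take k xs)))}"

definition num_shellings :: "'a set set \<Rightarrow> nat" where
  "num_shellings E = card (shellings E)"

definition complete_bipartite :: "nat \<Rightarrow> nat \<Rightarrow> (nat + nat) set set" where
  "complete_bipartite m n = {{Inl i, Inr j} | i j. i < m \<and> j < n}"

end

theory Submission imports Defs begin

definition compl :: "'a set set \<Rightarrow> 'a set set \<Rightarrow> 'a set list set" where
  "compl E S = {xs. distinct xs \<and> set xs = E - S \<and>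
      (\<forall>k\<in>{1..length xs}. edges_connected (S \<union> set (take k xs)))}"

lemma shellings_compl: "shellings E = compl E {}"
  unfolding shellings_def compl_def by simp

lemma compl_Nil: "[] \<in> compl E S \<longleftrightarrow> E - S = {}"
  unfolding compl_def by auto

lemma compl_Cons:
  "e # ys \<in> compl E S \<longleftrightarrow> e \<in> E - S \<and> edges_connected (insert e S) \<and> ys \<in> compl E (insert e S)"
proof
  assume h: "e # ys \<in> compl E S"
  have e: "e \<in> E - S" using h unfolding compl_def by auto
  moreover have "edges_connected (insert e S)"
    using h unfolding compl_def by (auto dest: bspec[of _ _ 1])
  moreover have "ys \<in> compl E (insert e S)"
  proof -
    have "distinct ys" "e \<notin> set ys" using h unfolding compl_def by auto
    moreover have "set ys = E - insert e S" using h \<open>e \<notin> set ys\<close> unfolding compl_def by auto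
    moreover have "\<forall>k\<in>{1..length ys}. edges_connected (insert e S \<union> set (take k ys))"
    proof
      fix k assume k: "k \<in> {1..length ys}"
      then have "Suc k \<in> {1..length (e#ys)}" by simp
      then have "edges_connected (S \<union> set (take (Suc k) (e#ys)))" using h unfolding compl_def by blast
      then show "edges_connected (insert e S \<union> set (take k ys))" by simp
    qed
    ultimately show ?thesis unfolding compl_def by blast
  qed
  ultimately show "e \<in> E - S \<and> edges_connected (insert e S) \<and> ys \<in> compl E (insert e S)" by blast
next
  assume h: "e \<in> E - S \<and> edges_connected (insert e S) \<and> ys \<in> compl E (insert e S)"
  have "distinct (e#ys)" "set (e#ys) = E - S" using h unfolding compl_def by auto
  moreover have "\<forall>k\<in>{1..length (e#ys)}. edges_connected (S \<union> set (take k (e#ys)))"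
  proof
    fix k assume k: "k \<in> {1..length (e#ys)}"
    show "edges_connected (S \<union> set (take k (e#ys)))"
    proof (cases "k = 1")
      case True then show ?thesis using h by simp
    next
      case False
      then obtain k' where k': "k = Suc k'" "k' \<in> {1..length ys}" using k by (cases k) auto
      then have "edges_connected (insert e S \<union> set (take k' ys))" using h unfolding compl_def by blast
      then show ?thesis using k' by simp
    qed
  qed
  ultimately show "e # ys \<in> compl E S" unfolding compl_def by blast
qed

lemma compl_finite:
  assumes "finite E" shows "finite (compl E S)"
proof -
  have "compl E S \<subseteq> {xs. set xs \<subseteq> E \<and> length xs \<le> card E}"
  proof
    fix xs assume "xs \<in> compl E S"
    then have "distinct xs" "set xs \<subseteq> E" unfolding compl_def by auto
    then show "xs \<in> {xs. set xs \<subseteq> E \<and> length xs \<le> card E}"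
      using assms by (metis card_mono distinct_card mem_Collect_eq)
  qed
  then show ?thesis using finite_lists_length_le[OF assms] by (rule finite_subset)
qed

lemma compl_card:
  assumes "finite E" "E - S \<noteq> {}"
  shows "card (compl E S) = (\<Sum>e\<in>{e\<in>E-S. edges_connected (insert e S)}. card (compl E (insert e S)))"
proof -
  let ?V = "{e\<in>E-S. edges_connected (insert e S)}"
  have eq: "compl E S = (\<Union>e\<in>?V. Cons e ` compl E (insert e S))"
  proof
    show "compl E S \<subseteq> (\<Union>e\<in>?V. Cons e ` compl E (insert e S))"
    proof
      fix xs assume xs: "xs \<in> compl E S"
      show "xs \<in> (\<Union>e\<in>?V. Cons e ` compl E (insert e S))"
      proof (cases xs)
        case Nil then show ?thesis using xs assms compl_Nil by auto
      next
        case (Cons e ys)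
        then have "e \<in> ?V" "ys \<in> compl E (insert e S)" using xs compl_Cons[of e ys E S] by auto
        then show ?thesis using Cons by blast
      qed
    qed
  next
    show "(\<Union>e\<in>?V. Cons e ` compl E (insert e S)) \<subseteq> compl E S"
    proof (safe)
      fix e ys assume "e \<in> E" "e \<notin> S" "edges_connected (insert e S)" "ys \<in> compl E (insert e S)"
      then show "e # ys \<in> compl E S" using compl_Cons[of e ys E S] by blast
    qed
  qed
  have "card (\<Union>e\<in>?V. Cons e ` compl E (insert e S)) = (\<Sum>e\<in>?V. card (Cons e ` compl E (insert e S)))"
  proof (rule card_UN_disjoint)
    show "finite ?V" using assms by simp
    show "\<forall>e\<in>?V. finite (Cons e ` compl E (insert e S))" using compl_finite[OF assms(1)] by blast
    show "\<forall>e\<in>?V. \<forall>e'\<in>?V. e \<noteq> e' \<longrightarrow> Cons e ` compl E (insert e S) \<inter> Cons e' ` compl E (insert e' S) = {}"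
      by blast
  qed
  also have "\<dots> = (\<Sum>e\<in>?V. card (compl E (insert e S)))"
    by (intro sum.cong refl card_image) (simp add: inj_on_def)
  finally show ?thesis using eq by simp
qed

lemma conn_single: "edges_connected {{p,q}}"
proof -
  have "(p,q) \<in> adj_rel {{p,q}}" "(q,p) \<in> adj_rel {{p,q}}" unfolding adj_rel_def
    by (auto simp: doubleton_eq_iff)
  then show ?thesis unfolding edges_connected_def by auto
qed

lemma conn_insert:
  assumes S: "edges_connected S" "\<Union>S \<noteq> {}"
  shows "edges_connected (insert {p,q} S) \<longleftrightarrow> {p,q} \<inter> \<Union>S \<noteq> {}"
proof
  assume c: "edges_connected (insert {p,q} S)"
  show "{p,q} \<inter> \<Union>S \<noteq> {}"
  proof
    assume dis: "{p,q} \<inter> \<Union>S = {}"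
    obtain u where u: "u \<in> \<Union>S" using S by auto
    have "(u,p) \<in> (adj_rel (insert {p,q} S))\<^sup>*" using c u unfolding edges_connected_def by auto
    moreover have "(u,w) \<in> (adj_rel (insert {p,q} S))\<^sup>* \<Longrightarrow> w \<in> \<Union>S" for w
    proof (induction rule: rtrancl_induct)
      case base then show ?case using u .
    next
      case (step y z)
      then have "{y,z} \<in> insert {p,q} S" unfolding adj_rel_def by auto
      moreover have "{y,z} \<noteq> {p,q}" using step dis by auto
      ultimately show ?case by auto
    qed
    ultimately show False using dis by auto
  qed
next
  assume i: "{p,q} \<inter> \<Union>S \<noteq> {}"
  let ?R = "(adj_rel (insert {p,q} S))\<^sup>*"
  have mono: "(adj_rel S)\<^sup>* \<subseteq> ?R" by (rule rtrancl_mono) (auto simp: adj_rel_def)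
  have "(p,q) \<in> adj_rel (insert {p,q} S)" "(q,p) \<in> adj_rel (insert {p,q} S)" unfolding adj_rel_def
    by (auto simp: doubleton_eq_iff)
  then have pq: "(p,q) \<in> ?R" "(q,p) \<in> ?R" by auto
  obtain r where r: "r \<in> {p,q}" "r \<in> \<Union>S" using i by auto
  have toR: "(w, r) \<in> ?R \<and> (r, w) \<in> ?R" if w: "w \<in> \<Union>(insert {p,q} S)" for w
  proof -
    consider "w \<in> \<Union>S" | "w = p" | "w = q" using w by auto
    then show ?thesis
    proof cases
      case 1 then show ?thesis using S(1) r mono unfolding edges_connected_def by blast
    next
      case 2 then show ?thesis using r pq by auto
    next
      case 3 then show ?thesis using r pq by auto
    qed
  qed
  show "edges_connected (insert {p,q} S)"
    unfolding edges_connected_def proof (intro ballI) fix u v assume "u \<in> \<Union>(insert {p,q} S)" "v \<in> \<Union>(insert {p,q} S)" then show "(u,v) \<in> ?R" using toR rtrancl_trans by metis qed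
qed

definition Gf :: "nat \<Rightarrow> nat \<Rightarrow> nat \<Rightarrow> nat \<Rightarrow> nat \<Rightarrow> real" where
"Gf m n a b k = fact (m*n - k) * fact (m + b - 1) * fact (a + n - 1) / (fact (a + b - 1) * fact (m + n - 1))"

lemma Gf_rec:
  assumes "1 \<le> a" "a \<le> m" "1 \<le> b" "b \<le> n" "k < m*n" "k \<le> a*b"
  shows "Gf m n a b k = real (a*b - k) * Gf m n a b (k+1) + real ((m-a)*b) * Gf m n (a+1) b (k+1)
     + real (a*(n-b)) * Gf m n a (b+1) (k+1)"
proof -
  have e1: "(fact (m*n-k)::real) = real (m*n-k) * fact (m*n-(k+1))"
  proof -
    have "(fact (m*n-k)::real) = real (m*n-k) * fact (m*n-k-1)"
      using assms by (intro fact_reduce) simp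
    then show ?thesis by (simp add: diff_diff_add)
  qed
  have e2: "(fact (m+(b+1)-1)::real) = real (m+b) * fact (m+b-1)"
    using fact_reduce[of "m+b"] assms by simp
  have e3: "(fact (a+1+n-1)::real) = real (a+n) * fact (a+n-1)"
    using fact_reduce[of "a+n"] assms by simp
  have e4: "(fact (a+1+b-1)::real) = real (a+b) * fact (a+b-1)"
    using fact_reduce[of "a+b"] assms by simp
  have e5: "(fact (a+(b+1)-1)::real) = real (a+b) * fact (a+b-1)"
    using fact_reduce[of "a+b"] assms by simp
  have id: "(real (m*n) - real k) * (real a + real b) = (real a * real b - real k) * (real a + real b)
     + (real m - real a) * real b * (real a + real n) + real a * (real n - real b) * (real m + real b)"
    by (simp add: algebra_simps)
  define X where "X = fact (m*n-(k+1)) * fact (m + b - 1) * fact (a + n - 1) / (fact (a + b - 1) * fact (m + n - 1)::real)"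
  have L: "Gf m n a b k = (real (m*n) - real k) * X"
    unfolding Gf_def X_def e1 using assms by (simp add: of_nat_diff)
  have R1: "Gf m n a b (k+1) = X" unfolding Gf_def X_def by simp
  have R2: "Gf m n (a+1) b (k+1) = X * (real a + real n) / (real a + real b)"
    unfolding Gf_def X_def e3 e4 by (simp add: ac_simps)
  have R3: "Gf m n a (b+1) (k+1) = X * (real m + real b) / (real a + real b)"
    unfolding Gf_def X_def e2 e5 by (simp add: ac_simps)
  have ab: "real a + real b > 0" using assms by simp
  have c: "real (a*b-k) = real a * real b - real k" "real ((m-a)*b) = (real m - real a) * real b"
    "real (a*(n-b)) = real a * (real n - real b)" using assms by (simp_all add: of_nat_diff)
  define D where "D = real a + real b"
  have D0: "D \<noteq> 0" using ab D_def by simp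
  have R2': "D * Gf m n (a+1) b (k+1) = X * (real a + real n)" using D0 unfolding R2 D_def by simp
  have R3': "D * Gf m n a (b+1) (k+1) = X * (real m + real b)" using D0 unfolding R3 D_def by simp
  have "D * (real (a*b - k) * Gf m n a b (k+1) + real ((m-a)*b) * Gf m n (a+1) b (k+1)
     + real (a*(n-b)) * Gf m n a (b+1) (k+1)) =
     (real a * real b - real k) * D * X + (real m - real a) * real b * (D * Gf m n (a+1) b (k+1))
     + real a * (real n - real b) * (D * Gf m n a (b+1) (k+1))"
    unfolding c R1 by (simp add: algebra_simps)
  also have "\<dots> = X * ((real a * real b - real k) * (real a + real b)
     + (real m - real a) * real b * (real a + real n) + real a * (real n - real b) * (real m + real b))"
    unfolding R2' R3' unfolding D_def by (simp add: algebra_simps)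
  also have "\<dots> = D * Gf m n a b k" unfolding id[symmetric] L D_def by (simp add: algebra_simps)
  finally show ?thesis using D0 by simp
qed

definition LA :: "(nat + nat) set set \<Rightarrow> nat set" where "LA S = {i. Inl i \<in> \<Union>S}"
definition RB :: "(nat + nat) set set \<Rightarrow> nat set" where "RB S = {j. Inr j \<in> \<Union>S}"

lemma E_eq: "complete_bipartite m n = (\<lambda>(i,j). {Inl i, Inr j}) ` ({..<m}\<times>{..<n})"
  unfolding complete_bipartite_def by auto

lemma g_eq: "({Inl i, Inr j} :: (nat+nat) set) = {Inl i', Inr j'} \<longleftrightarrow> i = i' \<and> j = j'"
  by (auto simp: doubleton_eq_iff)

lemma g_inj: "inj_on (\<lambda>(i,j). ({Inl i, Inr j} :: (nat+nat) set)) X"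
  by (auto simp: inj_on_def g_eq)

lemma E_finite: "finite (complete_bipartite m n)"
  unfolding E_eq by simp

lemma E_card: "card (complete_bipartite m n) = m * n"
  unfolding E_eq by (simp add: card_image[OF g_inj] card_cartesian_product)

lemma LA_insert: "LA (insert {Inl i, Inr j} S) = insert i (LA S)"
  unfolding LA_def by auto
lemma RB_insert: "RB (insert {Inl i, Inr j} S) = insert j (RB S)"
  unfolding RB_def by auto

lemma main:
  assumes mn: "1 \<le> m" "1 \<le> n"
  shows "S \<subseteq> complete_bipartite m n \<Longrightarrow> S \<noteq> {} \<Longrightarrow> edges_connected S \<Longrightarrow>
    real (card (compl (complete_bipartite m n) S)) = Gf m n (card (LA S)) (card (RB S)) (card S)"
proof (induction "card (complete_bipartite m n - S)" arbitrary: S rule: less_induct)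
  case less
  define E where "E = complete_bipartite m n"
  define A where "A = LA S"
  define B where "B = RB S"
  define g where "g = (\<lambda>(i,j). ({Inl i, Inr j} :: (nat+nat) set))"
  have SE: "S \<subseteq> E" using less.prems E_def by simp
  have memS: "\<exists>i j. e = {Inl i, Inr j} \<and> i < m \<and> j < n" if "e \<in> S" for e
    using that SE unfolding E_def complete_bipartite_def by auto
  have finS: "finite S" using SE E_finite E_def finite_subset by blast
  have inA: "Inl i \<in> \<Union>S \<longleftrightarrow> i \<in> A" for i unfolding A_def LA_def by simp
  have inB: "Inr j \<in> \<Union>S \<longleftrightarrow> j \<in> B" for j unfolding B_def RB_def by simp
  have gS: "{Inl i, Inr j} \<in> S \<Longrightarrow> i \<in> A \<and> j \<in> B" for i j using inA inB by blast
  have Asub: "A \<subseteq> {..<m}"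
  proof
    fix i assume "i \<in> A"
    then obtain e where "e \<in> S" "Inl i \<in> e" using inA by blast
    then show "i \<in> {..<m}" using memS by fastforce
  qed
  have Bsub: "B \<subseteq> {..<n}"
  proof
    fix j assume "j \<in> B"
    then obtain e where "e \<in> S" "Inr j \<in> e" using inB by blast
    then show "j \<in> {..<n}" using memS by fastforce
  qed
  have finA: "finite A" and finB: "finite B" using Asub Bsub finite_subset by auto
  obtain e0 where "e0 \<in> S" using less.prems by blast
  then obtain i0 j0 where "{Inl i0, Inr j0} \<in> S" using memS by blast
  then have i0: "i0 \<in> A" and j0: "j0 \<in> B" using gS by auto
  have a1: "1 \<le> card A" using i0 finA by (metis One_nat_def Suc_leI card_gt_0_iff empty_iff)
  have b1: "1 \<le> card B" using j0 finB by (metis One_nat_def Suc_leI card_gt_0_iff empty_iff)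
  have am: "card A \<le> m" using card_mono[OF _ Asub] by simp
  have bn: "card B \<le> n" using card_mono[OF _ Bsub] by simp
  define QS where "QS = {(i,j). {Inl i, Inr j} \<in> S}"
  have QSsub: "QS \<subseteq> A \<times> B" unfolding QS_def using gS by auto
  have S_QS: "S = g ` QS"
  proof
    show "S \<subseteq> g ` QS"
    proof
      fix e assume "e \<in> S"
      then obtain i j where "e = {Inl i, Inr j}" using memS by blast
      then show "e \<in> g ` QS" using \<open>e \<in> S\<close> unfolding QS_def g_def by force
    qed
    show "g ` QS \<subseteq> S" unfolding QS_def g_def by auto
  qed
  have cardS: "card S = card QS" unfolding S_QS g_def by (rule card_image[OF g_inj])
  have finQS: "finite QS" using QSsub finA finB finite_subset by blast
  have kab: "card S \<le> card A * card B"
    using cardS card_mono[OF _ QSsub] finA finB by (simp add: card_cartesian_product)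
  have UnS: "\<Union>S \<noteq> {}" using \<open>{Inl i0, Inr j0} \<in> S\<close> by blast
  show ?case
  proof (cases "E - S = {}")
    case True
    then have SeqE: "S = E" using SE by blast
    have "{..<m} \<subseteq> A"
    proof
      fix i assume i: "i \<in> {..<m}"
      have "{Inl i, Inr 0} \<in> E" unfolding E_def complete_bipartite_def
        using i mn by (intro CollectI exI conjI refl) auto
      then have "{Inl i, Inr 0} \<in> S" using SeqE by simp
      then show "i \<in> A" using gS by blast
    qed
    then have "A = {..<m}" using Asub by (rule equalityI[rotated])
    moreover have "{..<n} \<subseteq> B"
    proof
      fix j assume j: "j \<in> {..<n}"
      have "{Inl 0, Inr j} \<in> E" unfolding E_def complete_bipartite_def
        using j mn by (intro CollectI exI conjI refl) auto
      then have "{Inl 0, Inr j} \<in> S" using SeqE by simp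
      then show "j \<in> B" using gS by blast
    qed
    then have "B = {..<n}" using Bsub by (rule equalityI[rotated])
    moreover have "card S = m * n" using SeqE E_card E_def by simp
    moreover have "compl E S = {[]}"
    proof (intro equalityI subsetI)
      fix xs assume "xs \<in> compl E S"
      then have "set xs = {}" using True unfolding compl_def by simp
      then show "xs \<in> {[]}" by simp
    next
      fix xs :: "(nat+nat) set list" assume "xs \<in> {[]}"
      then show "xs \<in> compl E S" using True compl_Nil[of E S] by simp
    qed
    ultimately show ?thesis unfolding E_def[symmetric] A_def[symmetric] B_def[symmetric]
      by (simp add: Gf_def)
  next
    case False
    define P where "P = {(i,j) \<in> {..<m}\<times>{..<n}. g (i,j) \<notin> S \<and> (i \<in> A \<or> j \<in> B)}"
    let ?V = "{e\<in>E-S. edges_connected (insert e S)}"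
    have VP: "?V = g ` P"
    proof
      show "?V \<subseteq> g ` P"
      proof
        fix e assume e: "e \<in> ?V"
        then obtain i j where ij: "e = {Inl i, Inr j}" "i < m" "j < n"
          unfolding E_def complete_bipartite_def by auto
        have "{Inl i, Inr j} \<inter> \<Union>S \<noteq> {}" using e ij conn_insert[OF less.prems(3) UnS] by auto
        then have "Inl i \<in> \<Union>S \<or> Inr j \<in> \<Union>S" by auto
        then have "i \<in> A \<or> j \<in> B" using inA inB by simp
        then have "(i,j) \<in> P" using e ij unfolding P_def g_def by simp
        moreover have "e = g (i,j)" using ij unfolding g_def by simp
        ultimately show "e \<in> g ` P" by (rule rev_image_eqI)
      qed
      show "g ` P \<subseteq> ?V"
      proof
        fix e assume "e \<in> g ` P"
        then obtain i j where ij: "e = {Inl i, Inr j}" "i < m" "j < n" "e \<notin> S" "i \<in> A \<or> j \<in> B"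
          unfolding P_def g_def by auto
        then have "Inl i \<in> \<Union>S \<or> Inr j \<in> \<Union>S" using inA inB by simp
        then have "{Inl i, Inr j} \<inter> \<Union>S \<noteq> {}" by auto
        then have "edges_connected (insert e S)" using ij conn_insert[OF less.prems(3) UnS] by auto
        moreover have "e \<in> E" using ij unfolding E_def complete_bipartite_def by auto
        ultimately show "e \<in> ?V" using ij by auto
      qed
    qed
    have IH: "real (card (compl E (insert (g (i,j)) S))) = Gf m n (card (insert i A)) (card (insert j B)) (Suc (card S))"
      if ij: "(i,j) \<in> P" for i j
    proof -
      have e: "g (i,j) \<in> ?V" using VP ij by blast
      have lt: "card (E - insert (g (i,j)) S) < card (E - S)"
        using e E_finite[of m n] unfolding E_def by (intro psubset_card_mono) auto
      have "real (card (compl E (insert (g (i,j)) S))) =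
        Gf m n (card (LA (insert (g (i,j)) S))) (card (RB (insert (g (i,j)) S))) (card (insert (g (i,j)) S))"
        using less.hyps[OF lt[unfolded E_def]] e less.prems SE unfolding E_def by auto
      also have "\<dots> = Gf m n (card (insert i A)) (card (insert j B)) (Suc (card S))"
        using e finS unfolding g_def A_def B_def by (simp add: LA_insert RB_insert)
      finally show ?thesis .
    qed
    define h where "h = (\<lambda>(i,j). Gf m n (card (insert i A)) (card (insert j B)) (Suc (card S)))"
    have "real (card (compl E S)) = (\<Sum>e\<in>?V. real (card (compl E (insert e S))))"
      using compl_card[OF E_finite False[unfolded E_def]] unfolding E_def by simp
    also have "\<dots> = (\<Sum>p\<in>P. real (card (compl E (insert (g p) S))))"
      unfolding VP g_def by (rule sum.reindex_cong[OF g_inj refl]) simp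
    also have "\<dots> = sum h P" unfolding h_def by (intro sum.cong refl) (auto simp: IH)
    finally have cs: "real (card (compl E S)) = sum h P" .
    define P1 where "P1 = A \<times> B - QS"
    define P2 where "P2 = ({..<m} - A) \<times> B"
    define P3 where "P3 = A \<times> ({..<n} - B)"
    have PU: "P = P1 \<union> P2 \<union> P3"
      unfolding P_def P1_def P2_def P3_def QS_def g_def using Asub Bsub gS by auto
    have fin1: "finite P1" "finite P2" "finite P3" unfolding P1_def P2_def P3_def using finA finB by auto
    have sP: "sum h P = sum h P1 + sum h P2 + sum h P3"
      unfolding PU using fin1
      by (subst sum.union_disjoint; auto simp: P1_def P2_def P3_def)+
    have s1: "sum h P1 = real (card A * card B - card S) * Gf m n (card A) (card B) (card S + 1)"
    proof -
      have "sum h P1 = (\<Sum>p\<in>P1. Gf m n (card A) (card B) (card S + 1))"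
        unfolding h_def P1_def by (intro sum.cong refl) (auto simp: insert_absorb)
      moreover have "card P1 = card A * card B - card S"
        unfolding P1_def cardS using QSsub finQS by (simp add: card_Diff_subset card_cartesian_product)
      ultimately show ?thesis by simp
    qed
    have s2: "sum h P2 = real ((m - card A) * card B) * Gf m n (card A + 1) (card B) (card S + 1)"
    proof -
      have "sum h P2 = (\<Sum>p\<in>P2. Gf m n (card A + 1) (card B) (card S + 1))"
        unfolding h_def P2_def using finA finB by (intro sum.cong refl) (auto simp: insert_absorb)
      moreover have "card P2 = (m - card A) * card B"
        unfolding P2_def using Asub finA by (simp add: card_Diff_subset card_cartesian_product)
      ultimately show ?thesis by simp
    qed
    have s3: "sum h P3 = real (card A * (n - card B)) * Gf m n (card A) (card B + 1) (card S + 1)"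
    proof -
      have "sum h P3 = (\<Sum>p\<in>P3. Gf m n (card A) (card B + 1) (card S + 1))"
        unfolding h_def P3_def using finA finB by (intro sum.cong refl) (auto simp: insert_absorb)
      moreover have "card P3 = card A * (n - card B)"
        unfolding P3_def using Bsub finB by (simp add: card_Diff_subset card_cartesian_product)
      ultimately show ?thesis by simp
    qed
    have "card S < card E" using SE False E_finite[of m n] unfolding E_def
      by (intro psubset_card_mono) auto
    then have klt: "card S < m * n" using E_card E_def by simp
    have "sum h P = Gf m n (card A) (card B) (card S)"
      unfolding sP s1 s2 s3 using Gf_rec[OF a1 am b1 bn klt kab] by simp
    then show ?thesis using cs unfolding E_def A_def B_def by simp
  qed
qed

theorem theorem2p1:
  fixes m n :: nat
  assumes "m \<ge> 1" and "n \<ge> 1"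
  shows "real (num_shellings (complete_bipartite m n))
         = fact m * fact n * fact (m * n) / fact (m + n - 1)"
proof -
  define E where "E = complete_bipartite m n"
  have En: "E - {} \<noteq> {}" using assms E_card[of m n] unfolding E_def by auto
  have V: "{e\<in>E-{}. edges_connected (insert e {})} = E"
    unfolding E_def complete_bipartite_def using conn_single by auto
  have each: "real (card (compl E {e})) = Gf m n 1 1 1" if e: "e \<in> E" for e
  proof -
    obtain i j where ij: "e = {Inl i, Inr j}" using e unfolding E_def complete_bipartite_def by auto
    have "real (card (compl E {e})) = Gf m n (card (LA {e})) (card (RB {e})) (card {e})"
      using main[OF assms, of "{e}"] e conn_single[of "Inl i" "Inr j"] unfolding E_def ij by auto
    also have "LA {e} = {i}" unfolding ij LA_def by auto
    also have "RB {e} = {j}" unfolding ij RB_def by auto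
    finally show ?thesis by simp
  qed
  have "real (num_shellings E) = (\<Sum>e\<in>E. real (card (compl E {e})))"
    unfolding num_shellings_def shellings_compl
    using compl_card[OF E_finite[of m n, folded E_def] En] V by simp
  also have "\<dots> = real (m*n) * Gf m n 1 1 1" using each E_card[of m n] unfolding E_def[symmetric] by simp
  also have "\<dots> = fact m * fact n * fact (m * n) / fact (m + n - 1)"
  proof -
    have "(fact (m*n)::real) = real (m*n) * fact (m*n-1)"
      using assms by (intro fact_reduce) (simp add: Suc_le_eq)
    then show ?thesis unfolding Gf_def by (simp add: add.commute)
  qed
  finally show ?thesis unfolding E_def .
qed
end
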